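(* Let $j$ be odd and $d$ an integer with $2d=3j+1$. Let $\gamma(t)=(t,t^2,\dots,t^d)$ be the moment curve in $\mathbb{R}^d$, and for $i=1,\dots,j$ let $\mu_i$ be the mass concentrated on the arc $\gamma((i,i+1))$ (the push-forward under $\gamma$ of the normalized Lebesgue measure on $(i,i+1)$). Then there are exactly $\binom{j}{(j-1)/2}$ ordered pairs $(H_1,H_2)$ of unoriented, non-parallel affine hyperplanes in $\mathbb{R}^d$ that equipart $\mu_1,\dots,\mu_j$ and such that $H_2$ passes through the origin.
   Context: A mass is a finite Borel probability measure vanishing on every affine hyperplane. Two hyperplanes $H_1,H_2$ equipart masses $\mu_1,\dots,\mu_j$ if each of the four regions $H_1^{a}\cap H_2^{b}$ ($a,b\in\{0,1\}$, $H_i^0,H_i^1$ the two closed sides of $H_i$) has measure $\tfrac14$ in every $\mu_\ell$. *)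

theory Defs
  imports "HOL-Analysis.Analysis"
begin

text \<open>Euclidean space R^d, represented by functions nat => real with coordinates
  0..d-1 (coordinate k is the (k+1)-st coordinate) and all other coordinates 0.\<close>
definition Rn :: "nat \<Rightarrow> (nat \<Rightarrow> real) set" where
  "Rn d = {x. \<forall>i\<ge>d. x i = 0}"

definition lin :: "nat \<Rightarrow> (nat \<Rightarrow> real) \<Rightarrow> (nat \<Rightarrow> real) \<Rightarrow> real" where
  "lin d a x = (\<Sum>i<d. a i * x i)"

definition affine_hyperplane :: "nat \<Rightarrow> (nat \<Rightarrow> real) set \<Rightarrow> bool" where
  "affine_hyperplane d H \<longleftrightarrow>
     (\<exists>a b. (\<exists>i<d. a i \<noteq> 0) \<and> H = {x \<in> Rn d. lin d a x = b})"

text \<open>The closed sides of a hyperplane H (a set containing exactly the two closed half-spaces).\<close>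
definition closed_sides :: "nat \<Rightarrow> (nat \<Rightarrow> real) set \<Rightarrow> (nat \<Rightarrow> real) set set" where
  "closed_sides d H =
     {S. \<exists>a b. (\<exists>i<d. a i \<noteq> 0) \<and> H = {x \<in> Rn d. lin d a x = b}
              \<and> S = {x \<in> Rn d. lin d a x \<le> b}}"

definition parallel_hyperplanes :: "nat \<Rightarrow> (nat \<Rightarrow> real) set \<Rightarrow> (nat \<Rightarrow> real) set \<Rightarrow> bool" where
  "parallel_hyperplanes d H1 H2 \<longleftrightarrow>
     (\<exists>a b1 b2. (\<exists>i<d. a i \<noteq> 0) \<and> H1 = {x \<in> Rn d. lin d a x = b1}
                                    \<and> H2 = {x \<in> Rn d. lin d a x = b2})"

definition moment_curve :: "nat \<Rightarrow> real \<Rightarrow> (nat \<Rightarrow> real)" where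
  "moment_curve d t = (\<lambda>k. if k < d then t ^ (k + 1) else 0)"

text \<open>mu_i: push-forward under gamma of normalized Lebesgue measure on (i, i+1)
  (the interval has length 1, so no normalization constant appears).\<close>
definition arc_mass :: "nat \<Rightarrow> nat \<Rightarrow> (nat \<Rightarrow> real) set \<Rightarrow> real" where
  "arc_mass d i S = measure lborel {t \<in> {real i <..< real i + 1}. moment_curve d t \<in> S}"

definition equiparts :: "nat \<Rightarrow> nat \<Rightarrow> (nat \<Rightarrow> real) set \<Rightarrow> (nat \<Rightarrow> real) set \<Rightarrow> bool" where
  "equiparts d j H1 H2 \<longleftrightarrow>
     (\<forall>S1 \<in> closed_sides d H1. \<forall>S2 \<in> closed_sides d H2. \<forall>i \<in> {1..j}.
        arc_mass d i (S1 \<inter> S2) = 1 / 4)"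

end

theory Submission
  imports Defs "HOL-Computational_Algebra.Polynomial"
begin


lemma lin_curve: "lin d a (moment_curve d t) = (\<Sum>i<d. a i * t^(Suc i))"
  by (simp add: lin_def moment_curve_def)

definition cpoly :: "nat \<Rightarrow> (nat\<Rightarrow>real) \<Rightarrow> real \<Rightarrow> real poly" where
  "cpoly d a b = (\<Sum>i<d. monom (a i) (Suc i)) - [:b:]"

definition qpoly :: "nat \<Rightarrow> (nat\<Rightarrow>real) \<Rightarrow> real poly" where
  "qpoly d a = (\<Sum>i<d. monom (a i) i)"

lemma poly_cpoly: "poly (cpoly d a b) t = lin d a (moment_curve d t) - b"
  by (simp add: cpoly_def poly_sum poly_monom lin_curve)

lemma poly_qpoly: "t * poly (qpoly d a) t = lin d a (moment_curve d t)"
  by (simp add: qpoly_def poly_sum poly_monom lin_curve sum_distrib_left mult_ac)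

lemma coeff_cpoly_Suc: "coeff (cpoly d a b) (Suc k) = (if k < d then a k else 0)"
  by (simp add: cpoly_def coeff_sum coeff_monom)

lemma coeff_cpoly_0: "coeff (cpoly d a b) 0 = - b"
  by (simp add: cpoly_def coeff_sum coeff_monom)

lemma coeff_qpoly: "coeff (qpoly d a) k = (if k < d then a k else 0)"
  by (simp add: qpoly_def coeff_sum coeff_monom)

lemma degree_cpoly: "degree (cpoly d a b) \<le> d"
proof (rule degree_le, intro allI impI)
  fix n assume "d < n"
  then obtain k where "n = Suc k" "d \<le> k" by (cases n) auto
  then show "coeff (cpoly d a b) n = 0" by (simp add: coeff_cpoly_Suc)
qed

lemma degree_qpoly: "degree (qpoly d a) \<le> d - 1"
  by (rule degree_le) (auto simp: coeff_qpoly)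

lemma cpoly_nz: "\<exists>i<d. a i \<noteq> 0 \<Longrightarrow> cpoly d a b \<noteq> 0"
  by (metis coeff_0 coeff_cpoly_Suc)

lemma qpoly_nz: "\<exists>i<d. a i \<noteq> 0 \<Longrightarrow> qpoly d a \<noteq> 0"
  by (metis coeff_0 coeff_qpoly)

lemma prod_dvd_roots:
  fixes p :: "real poly"
  assumes "finite R" "\<forall>r\<in>R. poly p r = 0"
  shows "(\<Prod>r\<in>R. [:-r,1:]) dvd p"
  using assms
proof (induction R arbitrary: p rule: finite_induct)
  case empty then show ?case by simp
next
  case (insert x R)
  have "poly p x = 0" using insert by simp
  then obtain q where q: "p = [:-x,1:] * q" by (auto simp: poly_eq_0_iff_dvd dvd_def)
  have "\<forall>r\<in>R. poly q r = 0"
  proof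
    fix r assume "r \<in> R"
    then have "r \<noteq> x" "poly p r = 0" using insert by auto
    then show "poly q r = 0" using q by simp
  qed
  then have "(\<Prod>r\<in>R. [:-r,1:]) dvd q" using insert by blast
  then have "[:-x,1:] * (\<Prod>r\<in>R. [:-r,1:]) dvd p" unfolding q by (metis dvd_refl mult_dvd_mono)
  then show ?case using insert by simp
qed

lemma degree_linprod: "finite R \<Longrightarrow> degree (\<Prod>r\<in>R. [:-r,1::real:]) = card R"
  by (subst degree_prod_eq_sum_degree) auto

lemma lead_linprod: "lead_coeff (\<Prod>r\<in>R. [:-r,1::real:]) = 1"
  by (simp add: lead_coeff_prod)

lemma poly_eq_smult_prod:
  fixes p :: "real poly"
  assumes "finite R" "p \<noteq> 0" "degree p \<le> card R" "\<forall>r\<in>R. poly p r = 0"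
  shows "\<exists>c. c \<noteq> 0 \<and> p = smult c (\<Prod>r\<in>R. [:-r,1:])"
proof -
  define P where "P = (\<Prod>r\<in>R. [:-r,1::real:])"
  obtain q where q: "p = P * q" using prod_dvd_roots[OF assms(1,4)] by (auto simp: P_def dvd_def)
  have "P \<noteq> 0" using lead_linprod[of R] by (auto simp: P_def)
  have "q \<noteq> 0" using q assms(2) by auto
  have "degree p = degree P + degree q" using q \<open>P \<noteq> 0\<close> \<open>q \<noteq> 0\<close> by (simp add: degree_mult_eq)
  then have "degree q = 0" using assms(3) degree_linprod[OF assms(1)] by (simp add: P_def)
  then have "q = [:coeff q 0:]" by (metis degree_0_id)
  then have "p = smult (coeff q 0) P" using q by (metis mult.commute mult_smult_left mult_1 smult_one)
  moreover have "coeff q 0 \<noteq> 0" using \<open>q \<noteq> 0\<close> \<open>q = [:coeff q 0:]\<close> by (metis pCons_0_0)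
  ultimately show ?thesis by (auto simp: P_def)
qed



lemma meas_finite: "finite (F::real set) \<Longrightarrow> measure lborel F = 0"
  by (simp add: measure_def null_setsD1 finite_imp_null_set_lborel)

lemma meas_sub_finite: "A \<subseteq> F \<Longrightarrow> finite (F::real set) \<Longrightarrow> measure lborel A = 0"
  by (meson finite_subset meas_finite)

lemma meas_Ioo_Un: "a \<le> b \<Longrightarrow> finite (E::real set) \<Longrightarrow> measure lborel ({a<..<b} \<union> E) = b - a"
  by (subst measure_Un_null_set) (auto intro: finite_imp_null_set_lborel)

lemma samesign_le:
  fixes f :: "real \<Rightarrow> real"
  assumes "continuous_on UNIV f" "x \<le> y" "\<forall>t. x \<le> t \<and> t \<le> y \<longrightarrow> f t \<noteq> 0"
  shows "(0 < f x) = (0 < f y)"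
proof -
  have c: "continuous_on {x..y} f" using assms(1) continuous_on_subset by blast
  have fx: "f x \<noteq> 0" and fy: "f y \<noteq> 0" using assms by auto
  show ?thesis
  proof (rule ccontr)
    assume "(0 < f x) \<noteq> (0 < f y)"
    then have "(f x \<le> 0 \<and> 0 \<le> f y) \<or> (f y \<le> 0 \<and> 0 \<le> f x)" by auto
    then obtain t where "x \<le> t" "t \<le> y" "f t = 0"
      using IVT'[of f x 0 y, OF _ _ assms(2) c] IVT2'[of f y 0 x, OF _ _ assms(2) c] by blast
    then show False using assms(3) by blast
  qed
qed

lemma samesign:
  fixes f :: "real \<Rightarrow> real"
  assumes "continuous_on UNIV f" "a < x" "x < b" "a < y" "y < b" "\<forall>t. a < t \<and> t < b \<longrightarrow> f t \<noteq> 0"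
  shows "(0 < f x) = (0 < f y)"
proof (cases "x \<le> y")
  case True
  then show ?thesis using samesign_le[OF assms(1) True] assms by force
next
  case False
  then have yx: "y \<le> x" by simp
  show ?thesis using samesign_le[OF assms(1) yx] assms by force
qed

lemma card3_sorted:
  assumes "card (Z::real set) = 3" shows "\<exists>a b c. a < b \<and> b < c \<and> Z = {a,b,c}"
proof -
  obtain x y z where Z: "Z = {x,y,z}" "x \<noteq> y" "y \<noteq> z" "x \<noteq> z"
    using assms unfolding card_3_iff by blast
  have "x<y \<and> y<z \<or> x<z \<and> z<y \<or> y<x \<and> x<z \<or> y<z \<and> z<x \<or> z<x \<and> x<y \<or> z<y \<and> y<x"
    using Z by linarith
  then show ?thesis using Z(1) by (elim disjE; metis insert_commute)
qed



lemma card_bool_pairs: "card (UNIV::(bool\<times>bool) set) = 4"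
  by (simp add: UNIV_Times_UNIV[symmetric] card_cartesian_product del: UNIV_Times_UNIV)

lemma pig3: "(UNIV::(bool\<times>bool) set) \<subseteq> {x,y,z} \<Longrightarrow> False"
proof -
  assume "(UNIV::(bool\<times>bool) set) \<subseteq> {x,y,z}"
  then have "card (UNIV::(bool\<times>bool) set) \<le> card {x,y,z}" by (intro card_mono) auto
  also have "\<dots> \<le> 3" by (intro card_insert_le_m1) auto
  finally show False by (simp add: card_bool_pairs)
qed

lemma pig4: "(UNIV::(bool\<times>bool) set) \<subseteq> {w,x,y,z} \<Longrightarrow> w\<noteq>x \<and> w\<noteq>y \<and> w\<noteq>z \<and> x\<noteq>y \<and> x\<noteq>z \<and> y\<noteq>z"
  by (metis insert_absorb2 insert_commute pig3)

lemma pad2: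
  fixes Z :: "real set"
  assumes "finite Z" "card Z \<le> 2" "Z \<subseteq> {lo<..<hi}" "lo < hi"
  shows "\<exists>a b. lo<a \<and> a<b \<and> b<hi \<and> Z \<subseteq> {a,b}"
proof -
  have "card Z = 0 \<or> card Z = 1 \<or> card Z = 2" using assms(2) by auto
  then show ?thesis
  proof (elim disjE)
    assume "card Z = 0"
    then have Z0: "Z = {}" using assms(1) by simp
    show ?thesis
      by (rule exI[where x="lo + (hi-lo)/3"], rule exI[where x="lo + 2*(hi-lo)/3"]) (use Z0 assms(4) in \<open>auto simp: field_simps\<close>)
  next
    assume "card Z = 1"
    then obtain x where Zx: "Z = {x}" by (auto simp: card_1_singleton_iff)
    then have x: "lo < x" "x < hi" using assms(3) by auto
    show ?thesis
    proof (cases "x < (lo+hi)/2")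
      case True show ?thesis
        by (rule exI[where x="x"], rule exI[where x="(x+hi)/2"]) (use x Zx True in auto)
    next
      case False show ?thesis
        by (rule exI[where x="(lo+x)/2"], rule exI[where x="x"]) (use x Zx False in auto)
    qed
  next
    assume "card Z = 2"
    then obtain x y where Zxy: "Z = {x,y}" "x \<noteq> y" by (auto simp: card_2_iff)
    have xy: "lo < x" "x < hi" "lo < y" "y < hi" using Zxy assms(3) by auto
    show ?thesis
      by (rule exI[where x="min x y"], rule exI[where x="max x y"]) (use xy Zxy in auto)
  qed
qed

lemma arc_lemma:
  fixes f g :: "real \<Rightarrow> real" and lo :: real
  assumes cf: "continuous_on UNIV f" and cg: "continuous_on UNIV g"
  assumes finf: "finite {t\<in>{lo<..<lo+1}. f t = 0}" and fing: "finite {t\<in>{lo<..<lo+1}. g t = 0}"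
  assumes q: "\<And>p q. measure lborel {t\<in>{lo<..<lo+1}. (if p then -1 else 1) * f t \<le> 0 \<and> (if q then -1 else 1) * g t \<le> 0} = 1/4"
  shows "3 \<le> card {t\<in>{lo<..<lo+1}. f t = 0} + card {t\<in>{lo<..<lo+1}. g t = 0} \<and>
    (card {t\<in>{lo<..<lo+1}. f t = 0} + card {t\<in>{lo<..<lo+1}. g t = 0} = 3 \<longrightarrow>
     ({t\<in>{lo<..<lo+1}. f t = 0} = {lo+1/4, lo+3/4} \<and> {t\<in>{lo<..<lo+1}. g t = 0} = {lo+1/2}) \<or>
     ({t\<in>{lo<..<lo+1}. f t = 0} = {lo+1/2} \<and> {t\<in>{lo<..<lo+1}. g t = 0} = {lo+1/4, lo+3/4}))"
proof -
  define I where "I = {lo<..<lo+1}"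
  define Zf where "Zf = {t\<in>I. f t = 0}"
  define Zg where "Zg = {t\<in>I. g t = 0}"
  define Z where "Z = Zf \<union> Zg"
  define pat where "pat t = (0 < f t, 0 < g t)" for t
  define Qs where "Qs pq = {t\<in>I. (if fst pq then -1 else 1) * f t \<le> 0 \<and> (if snd pq then -1 else 1) * g t \<le> (0::real)}" for pq :: "bool \<times> bool"
  have finZf: "finite Zf" using finf by (simp add: Zf_def I_def)
  have finZg: "finite Zg" using fing by (simp add: Zg_def I_def)
  have finZ: "finite Z" using finZf finZg by (simp add: Z_def)
  have ZI: "Z \<subseteq> I" by (auto simp: Z_def Zf_def Zg_def)
  have qm: "measure lborel (Qs pq) = 1/4" for pq
    using q[of "fst pq" "snd pq"] by (simp add: Qs_def I_def)
  have inQ: "t \<in> Qs pq \<longleftrightarrow> pat t = pq" if "t \<in> I" "t \<notin> Z" for t pq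
  proof -
    have "f t \<noteq> 0" "g t \<noteq> 0" using that by (auto simp: Z_def Zf_def Zg_def)
    then show ?thesis using that
      by (cases pq) (auto simp: Qs_def pat_def split: if_splits)
  qed
  have appear: "\<exists>t\<in>I. t \<notin> Z \<and> pat t = pq" for pq
  proof (rule ccontr)
    assume nt: "\<not> ?thesis"
    have "Qs pq \<subseteq> Z"
    proof
      fix t assume t: "t \<in> Qs pq"
      then have "t \<in> I" by (simp add: Qs_def)
      show "t \<in> Z"
      proof (rule ccontr)
        assume "t \<notin> Z"
        then have "pat t = pq" using inQ[OF \<open>t \<in> I\<close>] t by blast
        then show False using nt \<open>t \<in> I\<close> \<open>t \<notin> Z\<close> by blast
      qed
    qed
    then have "measure lborel (Qs pq) = 0" using finZ by (rule meas_sub_finite)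
    then show False using qm by simp
  qed
  have sf: "(0 < f x) = (0 < f y)" if "{a<..<b} \<subseteq> I" "{a<..<b} \<inter> Zf = {}" "a<x" "x<b" "a<y" "y<b" for a b x y
    by (rule samesign[OF cf, of a x b y]) (use that in \<open>unfold Zf_def; force\<close>)+
  have sg: "(0 < g x) = (0 < g y)" if "{a<..<b} \<subseteq> I" "{a<..<b} \<inter> Zg = {}" "a<x" "x<b" "a<y" "y<b" for a b x y
    by (rule samesign[OF cg, of a x b y]) (use that in \<open>unfold Zg_def; force\<close>)+
  have sp: "pat x = pat y" if "{a<..<b} \<subseteq> I" "{a<..<b} \<inter> Z = {}" "a<x" "x<b" "a<y" "y<b" for a b x y
    using sf[of a b x y] sg[of a b x y] that by (auto simp: pat_def Z_def)
  have card3: "3 \<le> card Z"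
  proof (rule ccontr)
    assume "\<not> 3 \<le> card Z"
    then obtain a b where ab: "lo<a" "a<b" "b<lo+1" "Z \<subseteq> {a,b}"
      using pad2[OF finZ _ ZI[unfolded I_def]] by force
    have ZI': "{lo<..<a} \<subseteq> I" "{a<..<b} \<subseteq> I" "{b<..<lo+1} \<subseteq> I" using ab by (auto simp: I_def)
    have Zd: "{lo<..<a} \<inter> Z = {}" "{a<..<b} \<inter> Z = {}" "{b<..<lo+1} \<inter> Z = {}" using ab by auto
    have "pq \<in> {pat ((lo+a)/2), pat ((a+b)/2), pat ((b+lo+1)/2)}" for pq
    proof (rule ccontr)
      assume npq: "pq \<notin> {pat ((lo+a)/2), pat ((a+b)/2), pat ((b+lo+1)/2)}"
      have "Qs pq \<subseteq> {a,b}"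
      proof
        fix t assume t: "t \<in> Qs pq"
        show "t \<in> {a,b}"
        proof (rule ccontr)
          assume tn: "t \<notin> {a,b}"
          then have tZ: "t \<notin> Z" using ab(4) by blast
          have tI: "t \<in> I" using t by (simp add: Qs_def)
          have pt: "pat t = pq" using inQ[OF tI tZ] t by blast
          have "t < a \<or> (a < t \<and> t < b) \<or> b < t" using tn by auto
          moreover have "lo < t" "t < lo + 1" using tI by (auto simp: I_def)
          ultimately have "pat t \<in> {pat ((lo+a)/2), pat ((a+b)/2), pat ((b+lo+1)/2)}"
            using sp[OF ZI'(1) Zd(1), of t "(lo+a)/2"] sp[OF ZI'(2) Zd(2), of t "(a+b)/2"]
              sp[OF ZI'(3) Zd(3), of t "(b+lo+1)/2"] ab by auto
          then show False using pt npq by simp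
        qed
      qed
      then have "measure lborel (Qs pq) = 0" by (rule meas_sub_finite) simp
      then show False using qm by simp
    qed
    then show False using pig3 by blast
  qed
  have cardZ: "card Z \<le> card Zf + card Zg" by (simp add: Z_def card_Un_le)
  have part1: "3 \<le> card Zf + card Zg" using card3 cardZ by linarith
  have part2: "card Zf + card Zg = 3 \<longrightarrow> (Zf = {lo+1/4, lo+3/4} \<and> Zg = {lo+1/2}) \<or> (Zf = {lo+1/2} \<and> Zg = {lo+1/4,lo+3/4})"
  proof
    assume s3: "card Zf + card Zg = 3"
    have cZ: "card Z = 3" using card3 cardZ s3 by linarith
    have "card Zf + card Zg = card Z + card (Zf \<inter> Zg)" using card_Un_Int[OF finZf finZg] by (simp add: Z_def)
    then have "card (Zf \<inter> Zg) = 0" using cZ s3 by simp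
    then have disj: "Zf \<inter> Zg = {}" using finZf by simp
    obtain z1 z2 z3 where zs: "z1<z2" "z2<z3" "Z = {z1,z2,z3}" using card3_sorted[OF cZ] by blast
    have zI: "lo < z1" "z3 < lo+1" using zs ZI by (auto simp: I_def)
    define P0 where "P0 = pat ((lo+z1)/2)"
    define P1 where "P1 = pat ((z1+z2)/2)"
    define P2 where "P2 = pat ((z2+z3)/2)"
    define P3 where "P3 = pat ((z3+lo+1)/2)"
    have sI: "{lo<..<z1} \<subseteq> I" "{z1<..<z2} \<subseteq> I" "{z2<..<z3} \<subseteq> I" "{z3<..<lo+1} \<subseteq> I"
      using zs zI by (auto simp: I_def)
    have sZ: "{lo<..<z1} \<inter> Z = {}" "{z1<..<z2} \<inter> Z = {}" "{z2<..<z3} \<inter> Z = {}" "{z3<..<lo+1} \<inter> Z = {}"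
      using zs by auto
    have reg: "(lo<t \<and> t<z1 \<and> pat t = P0) \<or> (z1<t \<and> t<z2 \<and> pat t = P1) \<or> (z2<t \<and> t<z3 \<and> pat t = P2) \<or> (z3 < t \<and> t < lo+1 \<and> pat t = P3)"
      if "t \<in> I" "t \<notin> Z" for t
    proof -
      have "lo < t" "t < lo+1" using that by (auto simp: I_def)
      moreover have "t \<noteq> z1" "t \<noteq> z2" "t \<noteq> z3" using that zs by auto
      ultimately show ?thesis
        using sp[OF sI(1) sZ(1), of t "(lo+z1)/2"] sp[OF sI(2) sZ(2), of t "(z1+z2)/2"]
          sp[OF sI(3) sZ(3), of t "(z2+z3)/2"] sp[OF sI(4) sZ(4), of t "(z3+lo+1)/2"] zs zI
        unfolding P0_def P1_def P2_def P3_def by force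
    qed
    have allP: "(UNIV::(bool\<times>bool) set) \<subseteq> {P0,P1,P2,P3}"
    proof
      fix pq :: "bool\<times>bool"
      obtain t where "t \<in> I" "t \<notin> Z" "pat t = pq" using appear by blast
      then show "pq \<in> {P0,P1,P2,P3}" using reg by blast
    qed
    note dist = pig4[OF allP]
    have len: "b - a = 1/4" if "lo \<le> a" "a < b" "b \<le> lo+1" "\<forall>t\<in>I. t\<notin>Z \<longrightarrow> (pat t = P \<longleftrightarrow> a<t \<and> t<b)"
      "{a<..<b} \<inter> Z = {}" for a b P
    proof -
      have "Qs P = {a<..<b} \<union> (Qs P \<inter> Z)"
      proof (intro equalityI subsetI)
        fix t assume t: "t \<in> Qs P"
        then have tI: "t \<in> I" by (simp add: Qs_def)
        show "t \<in> {a<..<b} \<union> (Qs P \<inter> Z)"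
        proof (cases "t \<in> Z")
          case False
          then have "pat t = P" using inQ[OF tI False] t by blast
          then show ?thesis using that(4) tI False by auto
        qed (use t in auto)
      next
        fix t assume t: "t \<in> {a<..<b} \<union> (Qs P \<inter> Z)"
        show "t \<in> Qs P"
        proof (cases "t \<in> Z")
          case False
          then have "t \<in> {a<..<b}" using t by auto
          then have tI: "t \<in> I" using that by (auto simp: I_def)
          then have "pat t = P" using that(4) False \<open>t \<in> {a<..<b}\<close> by auto
          then show ?thesis using inQ[OF tI False] by blast
        qed (use t that(5) in auto)
      qed
      then have "measure lborel (Qs P) = b - a" using meas_Ioo_Un[of a b "Qs P \<inter> Z"] that finZ by simp
      then show ?thesis using qm by simp
    qed
    have l0: "z1 - lo = 1/4"
    proof (rule len[of lo z1 P0])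
      show "\<forall>t\<in>I. t\<notin>Z \<longrightarrow> (pat t = P0 \<longleftrightarrow> lo<t \<and> t<z1)"
      proof (intro ballI impI)
        fix t assume tt: "t \<in> I" "t \<notin> Z"
        show "pat t = P0 \<longleftrightarrow> lo<t \<and> t<z1" using reg[OF tt] dist zs by auto
      qed
    qed (use zs zI sZ in auto)
    have l1: "z2 - z1 = 1/4"
    proof (rule len[of z1 z2 P1])
      show "\<forall>t\<in>I. t\<notin>Z \<longrightarrow> (pat t = P1 \<longleftrightarrow> z1<t \<and> t<z2)"
      proof (intro ballI impI)
        fix t assume tt: "t \<in> I" "t \<notin> Z"
        show "pat t = P1 \<longleftrightarrow> z1<t \<and> t<z2" using reg[OF tt] dist zs by auto
      qed
    qed (use zs zI sZ in auto)
    have l2: "z3 - z2 = 1/4"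
    proof (rule len[of z2 z3 P2])
      show "\<forall>t\<in>I. t\<notin>Z \<longrightarrow> (pat t = P2 \<longleftrightarrow> z2<t \<and> t<z3)"
      proof (intro ballI impI)
        fix t assume tt: "t \<in> I" "t \<notin> Z"
        show "pat t = P2 \<longleftrightarrow> z2<t \<and> t<z3" using reg[OF tt] dist zs by auto
      qed
    qed (use zs zI sZ in auto)
    have ZfZ: "Zf \<subseteq> Z" "Zg \<subseteq> Z" "Z = Zf \<union> Zg" by (auto simp: Z_def)
    have flipf: "False" if "za \<in> Zf" "zb \<in> Zf" "Q0 \<noteq> Q1" "Q1 \<noteq> Q2" "Q0 \<noteq> Q2"
      "Q0 = pat x0" "Q1 = pat x1" "Q2 = pat x2" "{a<..<b} \<subseteq> I" "{a<..<b} \<inter> Zg = {}"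
      "a < x0" "x0 < b" "a < x1" "x1 < b" "a < x2" "x2 < b" for za zb Q0 Q1 Q2 x0 x1 x2 a b
      using sg[OF that(9,10), of x0 x1] sg[OF that(9,10), of x1 x2] that unfolding pat_def by auto
    have flipg: "False" if "Q0 \<noteq> Q1" "Q1 \<noteq> Q2" "Q0 \<noteq> Q2"
      "Q0 = pat x0" "Q1 = pat x1" "Q2 = pat x2" "{a<..<b} \<subseteq> I" "{a<..<b} \<inter> Zf = {}"
      "a < x0" "x0 < b" "a < x1" "x1 < b" "a < x2" "x2 < b" for Q0 Q1 Q2 x0 x1 x2 a b
      using sf[OF that(7,8), of x0 x1] sf[OF that(7,8), of x1 x2] that unfolding pat_def by auto
    have n1: "\<not> (z1 \<in> Zf \<and> z2 \<in> Zf)"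
    proof
      assume h: "z1 \<in> Zf \<and> z2 \<in> Zf"
      have e: "{lo<..<z3} \<inter> Zg = {}" using h disj ZfZ zs by auto
      show False
        by (rule flipf[of z1 z2 P0 P1 P2 "(lo+z1)/2" "(z1+z2)/2" "(z2+z3)/2" lo z3])
          (use e h dist zs zI P0_def P1_def P2_def in \<open>auto simp: I_def\<close>)
    qed
    have n2: "\<not> (z2 \<in> Zf \<and> z3 \<in> Zf)"
    proof
      assume h: "z2 \<in> Zf \<and> z3 \<in> Zf"
      have e: "{z1<..<lo+1} \<inter> Zg = {}" using h disj ZfZ zs by auto
      show False
        by (rule flipf[of z2 z3 P1 P2 P3 "(z1+z2)/2" "(z2+z3)/2" "(z3+lo+1)/2" z1 "lo+1"])
          (use e h dist zs zI P1_def P2_def P3_def in \<open>auto simp: I_def\<close>)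
    qed
    have n3: "\<not> (z1 \<in> Zg \<and> z2 \<in> Zg)"
    proof
      assume h: "z1 \<in> Zg \<and> z2 \<in> Zg"
      have e: "{lo<..<z3} \<inter> Zf = {}" using h disj ZfZ zs by auto
      show False
        by (rule flipg[of P0 P1 P2 "(lo+z1)/2" "(z1+z2)/2" "(z2+z3)/2" lo z3])
          (use e h dist zs zI P0_def P1_def P2_def in \<open>auto simp: I_def\<close>)
    qed
    have n4: "\<not> (z2 \<in> Zg \<and> z3 \<in> Zg)"
    proof
      assume h: "z2 \<in> Zg \<and> z3 \<in> Zg"
      have e: "{z1<..<lo+1} \<inter> Zf = {}" using h disj ZfZ zs by auto
      show False
        by (rule flipg[of P1 P2 P3 "(z1+z2)/2" "(z2+z3)/2" "(z3+lo+1)/2" z1 "lo+1"])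
          (use e h dist zs zI P1_def P2_def P3_def in \<open>auto simp: I_def\<close>)
    qed
    have zv: "z1 = lo+1/4" "z2 = lo+1/2" "z3 = lo+3/4" using l0 l1 l2 by linarith+
    have "(Zf = {z1,z3} \<and> Zg = {z2}) \<or> (Zf = {z2} \<and> Zg = {z1,z3})"
    proof -
      have d': "x \<in> Zf \<Longrightarrow> x \<notin> Zg" for x using disj by blast
      have m: "x \<in> Zf \<or> x \<in> Zg \<longleftrightarrow> x = z1 \<or> x = z2 \<or> x = z3" for x using ZfZ(3) zs(3) by blast
      have "z1 \<in> Zf \<or> z1 \<in> Zg" using m by blast
      then show ?thesis
      proof
        assume a: "z1 \<in> Zf"
        then have b: "z2 \<in> Zg" using n1 m by blast
        then have c: "z3 \<in> Zf" using n4 m by blast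
        have "Zf = {z1,z3}" using a b c d' m by (auto; metis)
        moreover have "Zg = {z2}" using a b c d' m by (auto; metis)
        ultimately show ?thesis by simp
      next
        assume a: "z1 \<in> Zg"
        then have b: "z2 \<in> Zf" using n3 m by blast
        then have c: "z3 \<in> Zg" using n2 m by blast
        have "Zf = {z2}" using a b c d' m by (auto; metis)
        moreover have "Zg = {z1,z3}" using a b c d' m by (auto; metis)
        ultimately show ?thesis by simp
      qed
    qed
    then show "(Zf = {lo+1/4, lo+3/4} \<and> Zg = {lo+1/2}) \<or> (Zf = {lo+1/2} \<and> Zg = {lo+1/4,lo+3/4})"
      using zv by simp
  qed
  show ?thesis using part1 part2 unfolding Zf_def Zg_def I_def by blast
qed



lemma prod_sign:
  fixes R :: "real set"
  assumes "finite R" "t \<notin> R"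
  shows "((\<Prod>r\<in>R. t - r) < 0 \<longleftrightarrow> odd (card {r\<in>R. t < r})) \<and> (\<Prod>r\<in>R. t - r) \<noteq> 0"
  using assms
proof (induction R rule: finite_induct)
  case empty then show ?case by simp
next
  case (insert x R)
  have tx: "t \<noteq> x" using insert by simp
  have IH: "((\<Prod>r\<in>R. t - r) < 0 \<longleftrightarrow> odd (card {r\<in>R. t < r})) \<and> (\<Prod>r\<in>R. t - r) \<noteq> 0"
    using insert by simp
  have fin: "finite {r\<in>R. t < r}" using insert by simp
  have xn: "x \<notin> {r\<in>R. t < r}" using insert by simp
  have cs: "{r\<in>insert x R. t < r} = (if t < x then insert x {r\<in>R. t < r} else {r\<in>R. t < r})" by auto
  have cc: "card {r\<in>insert x R. t < r} = (if t < x then Suc (card {r\<in>R. t < r}) else card {r\<in>R. t < r})"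
    using cs card_insert_disjoint[OF fin xn] by simp
  have pr: "(\<Prod>r\<in>insert x R. t - r) = (t - x) * (\<Prod>r\<in>R. t - r)" using insert by simp
  show ?case
  proof (cases "t < x")
    case True
    then show ?thesis using IH pr cc tx by (auto simp: mult_less_0_iff)
  next
    case False
    then have "t > x" using tx by simp
    then show ?thesis using IH pr cc tx by (auto simp: mult_less_0_iff)
  qed
qed

lemma arcs_card_split:
  fixes Zs :: "nat \<Rightarrow> real set"
  assumes sub: "\<And>l. Zs l \<subseteq> {real l<..<real l + 1}" and fin: "\<And>l. finite (Zs l)"
  assumes i: "i \<in> {1..j}" and t: "real i < t" "t < real i + 1"
  shows "card {r\<in>(\<Union>l\<in>{1..j}. Zs l). t < r} = card (\<Union>l\<in>{i<..j}. Zs l) + card {r\<in>Zs i. t < r}"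
proof -
  have eq: "{r\<in>(\<Union>l\<in>{1..j}. Zs l). t < r} = (\<Union>l\<in>{i<..j}. Zs l) \<union> {r\<in>Zs i. t < r}"
  proof (intro equalityI subsetI)
    fix r assume "r \<in> {r\<in>(\<Union>l\<in>{1..j}. Zs l). t < r}"
    then obtain l where l: "l \<in> {1..j}" "r \<in> Zs l" "t < r" by auto
    have "r < real l + 1" using sub[of l] l by auto
    then have "real i < real l + 1" using t l by linarith
    then have "i \<le> l" by linarith
    then show "r \<in> (\<Union>l\<in>{i<..j}. Zs l) \<union> {r\<in>Zs i. t < r}"
      using l by (cases "i = l") auto
  next
    fix r assume r: "r \<in> (\<Union>l\<in>{i<..j}. Zs l) \<union> {r\<in>Zs i. t < r}"
    show "r \<in> {r\<in>(\<Union>l\<in>{1..j}. Zs l). t < r}"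
    proof (cases "r \<in> {r\<in>Zs i. t < r}")
      case True then show ?thesis using i by auto
    next
      case False
      then obtain l where l: "l \<in> {i<..j}" "r \<in> Zs l" using r by auto
      have "real l < r" using sub[of l] l by auto
      moreover have "real i + 1 \<le> real l" using l by auto
      ultimately have "t < r" using t by linarith
      then show ?thesis using l i by auto
    qed
  qed
  have disj: "(\<Union>l\<in>{i<..j}. Zs l) \<inter> {r\<in>Zs i. t < r} = {}"
  proof -
    have "r \<notin> Zs i" if "l \<in> {i<..j}" "r \<in> Zs l" for l r
    proof
      assume "r \<in> Zs i"
      then have "r < real i + 1" using sub[of i] by auto
      moreover have "real l < r" using sub[of l] that by auto
      moreover have "real i + 1 \<le> real l" using that by auto
      ultimately show False by linarith
    qed
    then show ?thesis by blast
  qed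
  show ?thesis unfolding eq using disj fin by (simp add: card_Un_disjoint)
qed

lemma arcs_card:
  fixes Zs :: "nat \<Rightarrow> real set"
  assumes sub: "\<And>l. Zs l \<subseteq> {real l<..<real l + 1}" and fin: "\<And>l. finite (Zs l)"
    and finA: "finite A"
  shows "card (\<Union>l\<in>A. Zs l) = (\<Sum>l\<in>A. card (Zs l))"
proof (rule card_UN_disjoint[OF finA])
  show "\<forall>i\<in>A. finite (Zs i)" using fin by blast
  show "\<forall>i\<in>A. \<forall>l\<in>A. i \<noteq> l \<longrightarrow> Zs i \<inter> Zs l = {}"
  proof (intro ballI impI)
    fix i l :: nat assume "i \<noteq> l"
    show "Zs i \<inter> Zs l = {}"
    proof (rule ccontr)
      assume "Zs i \<inter> Zs l \<noteq> {}"
      then obtain r where "r \<in> Zs i" "r \<in> Zs l" by auto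
      then have "real i < r" "r < real i + 1" "real l < r" "r < real l + 1" using sub[of i] sub[of l] by auto
      then have "i = l" by linarith
      then show False using \<open>i \<noteq> l\<close> by simp
    qed
  qed
qed

definition qi :: "real \<Rightarrow> real \<Rightarrow> nat" where
  "qi lo t = (if t < lo+1/4 then 0 else if t < lo+1/2 then 1 else if t < lo+3/4 then 2 else 3)"

lemma quarter_meas:
  assumes "A \<subseteq> {lo<..<lo+1}" "k < 4"
    "\<forall>t\<in>{lo<..<lo+1} - {lo+1/4, lo+1/2, lo+3/4}. t \<in> A \<longleftrightarrow> qi lo t = k"
  shows "measure lborel A = 1/4"
proof -
  define Q where "Q = {lo+1/4, lo+1/2, lo+3/4}"
  have "A = {lo + real k/4<..<lo + (real k + 1)/4} \<union> (A \<inter> Q)"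
  proof (intro equalityI subsetI)
    fix t assume t: "t \<in> A"
    show "t \<in> {lo + real k/4<..<lo + (real k + 1)/4} \<union> (A \<inter> Q)"
    proof (cases "t \<in> Q")
      case False
      then have "qi lo t = k" using assms t unfolding Q_def by blast
      moreover have "lo < t" "t < lo + 1" using t assms(1) by auto
      ultimately show ?thesis using False unfolding qi_def Q_def by (auto split: if_splits)
    qed (use t in auto)
  next
    fix t assume t: "t \<in> {lo + real k/4<..<lo + (real k + 1)/4} \<union> (A \<inter> Q)"
    show "t \<in> A"
    proof (cases "t \<in> A \<inter> Q")
      case False
      then have t': "lo + real k/4 < t" "t < lo + (real k + 1)/4" using t by auto
      have k: "k = 0 \<or> k = 1 \<or> k = 2 \<or> k = 3" using assms(2) by auto
      have "t \<in> {lo<..<lo+1} - Q" using t' k unfolding Q_def by auto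
      moreover have "qi lo t = k" using t' k unfolding qi_def by auto
      ultimately show ?thesis using assms(3) unfolding Q_def by blast
    qed auto
  qed
  then have "measure lborel A = measure lborel ({lo + real k/4<..<lo + (real k + 1)/4} \<union> (A \<inter> Q))" by simp
  also have "\<dots> = 1/4" by (subst meas_Ioo_Un) (auto simp: Q_def field_simps)
  finally show ?thesis .
qed

lemma ex4: "(\<exists>k<(4::nat). P k) \<longleftrightarrow> P 0 \<or> P 1 \<or> P 2 \<or> P 3"
  by (auto simp: less_Suc_eq numeral_eq_Suc)
lemma all4: "(\<forall>k<(4::nat). P k) \<longleftrightarrow> P 0 \<and> P 1 \<and> P 2 \<and> P 3"
  by (auto simp: less_Suc_eq numeral_eq_Suc)

lemma tabA: "\<exists>k<4. \<forall>q<4. ((u = odd (N1 + [2,1,1,0::nat] ! q)) \<and> (w = odd (N2 + [1,1,0,0::nat] ! q))) \<longleftrightarrow> q = k"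
  unfolding ex4 all4 by auto

lemma tabB: "\<exists>k<4. \<forall>q<4. ((u = odd (N1 + [1,1,0,0::nat] ! q)) \<and> (w = odd (N2 + [2,1,1,0::nat] ! q))) \<longleftrightarrow> q = k"
  unfolding ex4 all4 by auto



lemma poly_sum_le: fixes P :: "real poly" assumes "degree P \<le> n" shows "poly P t = (\<Sum>i\<le>n. coeff P i * t^i)"
  unfolding poly_altdef
  by (rule sum.mono_neutral_left) (use assms in \<open>auto simp: coeff_eq_0\<close>)

lemma PE1:
  fixes P :: "real poly"
  assumes "degree P \<le> d"
  shows "poly P t = coeff P 0 + lin d (\<lambda>k. coeff P (Suc k)) (moment_curve d t)"
proof -
  have "poly P t = (\<Sum>i<Suc d. coeff P i * t^i)" using poly_sum_le[OF assms] by (simp add: lessThan_Suc_atMost)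
  also have "\<dots> = coeff P 0 + (\<Sum>i<d. coeff P (Suc i) * t^(Suc i))" by (subst sum.lessThan_Suc_shift) simp
  finally show ?thesis by (simp add: lin_curve)
qed

lemma PE2:
  fixes P :: "real poly"
  assumes "degree P \<le> d - 1" "1 \<le> d"
  shows "t * poly P t = lin d (\<lambda>k. coeff P k) (moment_curve d t)"
proof -
  have "degree (pCons 0 P) \<le> d" using assms by (cases "P = 0") auto
  from PE1[OF this, of t] show ?thesis by simp
qed

definition Z1 :: "nat set \<Rightarrow> nat \<Rightarrow> real set" where
  "Z1 C l = (if l \<in> C then {real l + 1/4, real l + 3/4} else {real l + 1/2})"
definition Z2 :: "nat set \<Rightarrow> nat \<Rightarrow> real set" where
  "Z2 C l = (if l \<in> C then {real l + 1/2} else {real l + 1/4, real l + 3/4})"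
definition R1 :: "nat \<Rightarrow> nat set \<Rightarrow> real set" where "R1 j C = (\<Union>l\<in>{1..j}. Z1 C l)"
definition R2 :: "nat \<Rightarrow> nat set \<Rightarrow> real set" where "R2 j C = (\<Union>l\<in>{1..j}. Z2 C l)"
definition P1 :: "nat \<Rightarrow> nat set \<Rightarrow> real poly" where "P1 j C = (\<Prod>r\<in>R1 j C. [:-r,1:])"
definition P2 :: "nat \<Rightarrow> nat set \<Rightarrow> real poly" where "P2 j C = (\<Prod>r\<in>R2 j C. [:-r,1:])"
definition Hyp1 :: "nat \<Rightarrow> nat \<Rightarrow> nat set \<Rightarrow> (nat \<Rightarrow> real) set" where
  "Hyp1 d j C = {x\<in>Rn d. lin d (\<lambda>k. coeff (P1 j C) (Suc k)) x = - coeff (P1 j C) 0}"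
definition Hyp2 :: "nat \<Rightarrow> nat \<Rightarrow> nat set \<Rightarrow> (nat \<Rightarrow> real) set" where
  "Hyp2 d j C = {x\<in>Rn d. lin d (\<lambda>k. coeff (P2 j C) k) x = 0}"

lemma Z1_sub: "Z1 C l \<subseteq> {real l<..<real l + 1}" by (auto simp: Z1_def)
lemma Z2_sub: "Z2 C l \<subseteq> {real l<..<real l + 1}" by (auto simp: Z2_def)
lemma Z1_fin: "finite (Z1 C l)" by (simp add: Z1_def)
lemma Z2_fin: "finite (Z2 C l)" by (simp add: Z2_def)
lemma card_Z1: "card (Z1 C l) = (if l \<in> C then 2 else 1)" by (simp add: Z1_def)
lemma card_Z2: "card (Z2 C l) = (if l \<in> C then 1 else 2)" by (simp add: Z2_def)
lemma R1_fin: "finite (R1 j C)" by (simp add: R1_def Z1_fin)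
lemma R2_fin: "finite (R2 j C)" by (simp add: R2_def Z2_fin)

lemma sum_if_C: "C \<subseteq> A \<Longrightarrow> finite A \<Longrightarrow> (\<Sum>l\<in>A. (if l \<in> C then a else b)) = card C * a + (card A - card C) * (b::nat)"
proof -
  assume "C \<subseteq> A" "finite A"
  then have "(\<Sum>l\<in>A. (if l \<in> C then a else b)) = (\<Sum>l\<in>C. a) + (\<Sum>l\<in>A - C. b)"
    by (simp add: sum.If_cases Int_absorb1 Diff_eq[symmetric])
  also have "\<dots> = card C * a + (card A - card C) * b" using \<open>C \<subseteq> A\<close> \<open>finite A\<close>
    by (simp add: card_Diff_subset finite_subset)
  finally show ?thesis .
qed

lemma card_R1: "C \<subseteq> {1..j} \<Longrightarrow> card (R1 j C) = j + card C"
proof -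
  assume C: "C \<subseteq> {1..j}"
  have "card (R1 j C) = (\<Sum>l\<in>{1..j}. card (Z1 C l))" unfolding R1_def
    by (rule arcs_card[OF Z1_sub Z1_fin]) simp
  also have "\<dots> = card C * 2 + (j - card C) * 1" unfolding card_Z1 using sum_if_C[OF C] by simp
  also have "\<dots> = j + card C" using card_mono[OF _ C] by simp
  finally show ?thesis .
qed

lemma card_R2: "C \<subseteq> {1..j} \<Longrightarrow> card (R2 j C) + card C = 2 * j"
proof -
  assume C: "C \<subseteq> {1..j}"
  have "card (R2 j C) = (\<Sum>l\<in>{1..j}. card (Z2 C l))" unfolding R2_def
    by (rule arcs_card[OF Z2_sub Z2_fin]) simp
  also have "\<dots> = card C * 1 + (j - card C) * 2" unfolding card_Z2 using sum_if_C[OF C] by simp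
  finally show ?thesis using card_mono[OF _ C] by simp
qed

lemma poly_P1: "poly (P1 j C) t = (\<Prod>r\<in>R1 j C. t - r)" by (simp add: P1_def poly_prod)
lemma poly_P2: "poly (P2 j C) t = (\<Prod>r\<in>R2 j C. t - r)" by (simp add: P2_def poly_prod)
lemma degree_P1: "degree (P1 j C) = card (R1 j C)" by (simp add: P1_def degree_linprod R1_fin)
lemma degree_P2: "degree (P2 j C) = card (R2 j C)" by (simp add: P2_def degree_linprod R2_fin)
lemma lead_P1: "coeff (P1 j C) (card (R1 j C)) = 1" using lead_linprod degree_P1 by (metis P1_def)
lemma lead_P2: "coeff (P2 j C) (card (R2 j C)) = 1" using lead_linprod degree_P2 by (metis P2_def)

lemma card2_filter: "a < b \<Longrightarrow> t \<noteq> a \<Longrightarrow> t \<noteq> b \<Longrightarrow>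
  card {r\<in>{a,b}. t < (r::real)} = (if t < a then 2 else if t < b then 1 else 0)"
proof -
  assume h: "a < b" "t \<noteq> a" "t \<noteq> b"
  have "{r\<in>{a,b}. t < r} = (if t < a then {a,b} else if t < b then {b} else {})" using h by auto
  then show ?thesis using h by simp
qed

lemma card1_filter: "card {r\<in>{a}. t < (r::real)} = (if t < a then 1 else 0)"
proof -
  have "{r\<in>{a}. t < r} = (if t < a then {a} else {})" by auto
  then show ?thesis by simp
qed

lemma kq: "t \<notin> {lo+1/4,lo+1/2,lo+3/4} \<Longrightarrow>
   card {r\<in>{lo+1/4,lo+3/4}. t<r} = [2,1,1,0] ! qi lo t \<and> card {r\<in>{lo+1/2}. t<r} = [1,1,0,0] ! qi lo t"
proof -
  assume h: "t \<notin> {lo+1/4,lo+1/2,lo+3/4}"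
  have "card {r\<in>{lo+1/4,lo+3/4}. t<r} = (if t < lo+1/4 then 2 else if t < lo+3/4 then 1 else 0)"
    by (rule card2_filter) (use h in auto)
  moreover have "card {r\<in>{lo+1/2}. t<r} = (if t < lo+1/2 then 1 else 0)" by (rule card1_filter)
  ultimately show ?thesis by (simp add: qi_def)
qed

lemma qi_lt4: "qi lo t < 4" by (simp add: qi_def)



lemma arcs_mem:
  fixes Zs :: "nat \<Rightarrow> real set"
  assumes sub: "\<And>l. Zs l \<subseteq> {real l<..<real l + 1}"
  assumes i: "i \<in> {1..j}" and t: "real i < t" "t < real i + 1"
  shows "t \<in> (\<Union>l\<in>{1..j}. Zs l) \<longleftrightarrow> t \<in> Zs i"
proof
  assume "t \<in> (\<Union>l\<in>{1..j}. Zs l)"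
  then obtain l where l: "l \<in> {1..j}" "t \<in> Zs l" by auto
  then have "real l < t" "t < real l + 1" using sub[of l] by auto
  then have "l = i" using t by linarith
  then show "t \<in> Zs i" using l by simp
qed (use i in auto)

lemma cmul: "c \<noteq> 0 \<Longrightarrow> x \<noteq> 0 \<Longrightarrow> (c*x \<le> 0 \<longleftrightarrow> ((0<c) = (x<(0::real))))"
  by (auto simp: mult_le_0_iff)

lemma exist_meas:
  assumes i: "i \<in> {1..j}" and c: "c \<noteq> 0" "c' \<noteq> 0"
  shows "measure lborel {t\<in>{real i<..<real i+1}. c * poly (P1 j C) t \<le> 0 \<and> c' * poly (P2 j C) t \<le> 0} = 1/4"
proof -
  define lo where "lo = real i"
  define N1 where "N1 = card (\<Union>l\<in>{i<..j}. Z1 C l)"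
  define N2 where "N2 = card (\<Union>l\<in>{i<..j}. Z2 C l)"
  define K1 where "K1 = (if i \<in> C then [2,1,1,0::nat] else [1,1,0,0])"
  define K2 where "K2 = (if i \<in> C then [1,1,0,0::nat] else [2,1,1,0])"
  define A where "A = {t\<in>{real i<..<real i+1}. c * poly (P1 j C) t \<le> 0 \<and> c' * poly (P2 j C) t \<le> 0}"
  have key: "t \<in> A \<longleftrightarrow> ((0<c) = odd (N1 + K1 ! qi lo t) \<and> (0<c') = odd (N2 + K2 ! qi lo t))"
    if t: "t \<in> {lo<..<lo+1} - {lo+1/4,lo+1/2,lo+3/4}" for t
  proof -
    have tt: "real i < t" "t < real i + 1" using t by (auto simp: lo_def)
    have nq: "t \<notin> {lo+1/4,lo+1/2,lo+3/4}" using t by blast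
    have "t \<notin> Z1 C i" "t \<notin> Z2 C i" using nq by (auto simp: Z1_def Z2_def lo_def)
    then have nR: "t \<notin> R1 j C" "t \<notin> R2 j C"
      using arcs_mem[OF Z1_sub i tt] arcs_mem[OF Z2_sub i tt] by (auto simp: R1_def R2_def)
    have k1: "card {r\<in>Z1 C i. t<r} = K1 ! qi lo t" "card {r\<in>Z2 C i. t<r} = K2 ! qi lo t"
      using kq[OF nq] by (auto simp: Z1_def Z2_def K1_def K2_def lo_def)
    have cs1: "card {r\<in>R1 j C. t<r} = N1 + K1 ! qi lo t"
      unfolding R1_def N1_def using arcs_card_split[OF Z1_sub Z1_fin i tt] k1 by simp
    have cs2: "card {r\<in>R2 j C. t<r} = N2 + K2 ! qi lo t"
      unfolding R2_def N2_def using arcs_card_split[OF Z2_sub Z2_fin i tt] k1 by simp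
    have s1: "(poly (P1 j C) t < 0 \<longleftrightarrow> odd (N1 + K1 ! qi lo t)) \<and> poly (P1 j C) t \<noteq> 0"
      using prod_sign[OF R1_fin nR(1)] cs1 by (simp add: poly_P1)
    have s2: "(poly (P2 j C) t < 0 \<longleftrightarrow> odd (N2 + K2 ! qi lo t)) \<and> poly (P2 j C) t \<noteq> 0"
      using prod_sign[OF R2_fin nR(2)] cs2 by (simp add: poly_P2)
    show ?thesis using tt s1 s2 cmul[OF c(1), of "poly (P1 j C) t"] cmul[OF c(2), of "poly (P2 j C) t"]
      by (auto simp: A_def)
  qed
  obtain k where k: "k < 4" "\<forall>q<4. ((0<c) = odd (N1 + K1 ! q) \<and> (0<c') = odd (N2 + K2 ! q)) \<longleftrightarrow> q = k"
  proof (cases "i \<in> C")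
    case True
    then show ?thesis using that tabA[of "0<c" N1 "0<c'" N2] by (auto simp: K1_def K2_def)
  next
    case False
    then show ?thesis using that tabB[of "0<c" N1 "0<c'" N2] by (auto simp: K1_def K2_def)
  qed
  have "measure lborel A = 1/4"
  proof (rule quarter_meas[of A lo k])
    show "A \<subseteq> {lo<..<lo + 1}" by (auto simp: A_def lo_def)
    show "k < 4" by (rule k(1))
    show "\<forall>t\<in>{lo<..<lo + 1} - {lo + 1 / 4, lo + 1 / 2, lo + 3 / 4}. (t \<in> A) = (qi lo t = k)"
      using key k(2) qi_lt4 by blast
  qed
  then show ?thesis by (simp add: A_def)
qed

lemma lin_neg: "lin d (\<lambda>k. - a k) x = - lin d a x"
  by (simp add: lin_def sum_negf)

lemma lin_zero: "lin d a (\<lambda>_. 0) = 0" by (simp add: lin_def)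
lemma zero_Rn: "(\<lambda>_. 0) \<in> Rn d" by (simp add: Rn_def)
lemma curve_Rn: "moment_curve d t \<in> Rn d" by (simp add: Rn_def moment_curve_def)

lemma arc_mass_eq: "arc_mass d i S = measure lborel {t\<in>{real i<..<real i+1}. moment_curve d t \<in> S}"
  by (simp add: arc_mass_def)

lemma cs_intro: "\<exists>i<d. a i \<noteq> 0 \<Longrightarrow> H = {x\<in>Rn d. lin d a x = b} \<Longrightarrow> {x\<in>Rn d. lin d a x \<le> b} \<in> closed_sides d H"
  unfolding closed_sides_def by blast

lemma equiparts_not_parallel:
  assumes "1 \<le> j" "equiparts d j H1 H2"
  shows "\<not> parallel_hyperplanes d H1 H2"
proof
  assume "parallel_hyperplanes d H1 H2"
  then obtain a b1 b2 where a: "\<exists>i<d. a i \<noteq> 0" and H: "H1 = {x \<in> Rn d. lin d a x = b1}" "H2 = {x \<in> Rn d. lin d a x = b2}"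
    unfolding parallel_hyperplanes_def by blast
  have na: "\<exists>i<d. - a i \<noteq> 0" using a by auto
  have Hn: "H1 = {x \<in> Rn d. lin d (\<lambda>k. - a k) x = - b1}" "H2 = {x \<in> Rn d. lin d (\<lambda>k. - a k) x = - b2}"
    using H by (auto simp: lin_neg)
  define F where "F = {t. poly (cpoly d a b1) t = 0}"
  have finF: "finite F" unfolding F_def by (rule poly_roots_finite[OF cpoly_nz[OF a]])
  obtain S1 S2 where S: "S1 \<in> closed_sides d H1" "S2 \<in> closed_sides d H2"
    and sub: "{t\<in>{real 1<..<real 1+1}. moment_curve d t \<in> S1 \<inter> S2} \<subseteq> F"
  proof (cases "b1 \<le> b2")
    case True
    show ?thesis
    proof (rule that[of "{x \<in> Rn d. lin d a x \<le> b1}" "{x \<in> Rn d. lin d (\<lambda>k. - a k) x \<le> - b2}"])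
      show "{x \<in> Rn d. lin d a x \<le> b1} \<in> closed_sides d H1"
        using a H(1) by (rule cs_intro)
      show "{x \<in> Rn d. lin d (\<lambda>k. - a k) x \<le> - b2} \<in> closed_sides d H2"
        using na Hn(2) by (rule cs_intro)
      show "{t\<in>{real 1<..<real 1+1}. moment_curve d t \<in> {x \<in> Rn d. lin d a x \<le> b1} \<inter> {x \<in> Rn d. lin d (\<lambda>k. - a k) x \<le> - b2}} \<subseteq> F"
        using True by (auto simp: F_def poly_cpoly lin_neg)
    qed
  next
    case False
    show ?thesis
    proof (rule that[of "{x \<in> Rn d. lin d (\<lambda>k. - a k) x \<le> - b1}" "{x \<in> Rn d. lin d a x \<le> b2}"])
      show "{x \<in> Rn d. lin d (\<lambda>k. - a k) x \<le> - b1} \<in> closed_sides d H1"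
        using na Hn(1) by (rule cs_intro)
      show "{x \<in> Rn d. lin d a x \<le> b2} \<in> closed_sides d H2"
        using a H(2) by (rule cs_intro)
      show "{t\<in>{real 1<..<real 1+1}. moment_curve d t \<in> {x \<in> Rn d. lin d (\<lambda>k. - a k) x \<le> - b1} \<inter> {x \<in> Rn d. lin d a x \<le> b2}} \<subseteq> F"
        using False by (auto simp: F_def poly_cpoly lin_neg)
    qed
  qed
  have "arc_mass d 1 (S1 \<inter> S2) = 1/4" using assms S unfolding equiparts_def by auto
  moreover have "arc_mass d 1 (S1 \<inter> S2) = 0" unfolding arc_mass_eq using meas_sub_finite[OF sub finF] .
  ultimately show False by simp
qed



lemma R_pos: "r \<in> R2 j C \<Longrightarrow> 0 < r" "r \<in> R1 j C \<Longrightarrow> 0 < r"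
  by (auto simp: R2_def R1_def Z2_def Z1_def split: if_splits)

lemma P1_root: "r \<in> R1 j C \<Longrightarrow> poly (P1 j C) r = 0"
  unfolding poly_P1 using R1_fin by (simp add: prod_zero_iff)
lemma P2_root: "r \<in> R2 j C \<Longrightarrow> poly (P2 j C) r = 0"
  unfolding poly_P2 using R2_fin by (simp add: prod_zero_iff)

lemma exist:
  assumes j: "odd j" "2*d = 3*j+1" and C: "C \<subseteq> {1..j}" "2 * card C = j+1"
  shows "affine_hyperplane d (Hyp1 d j C) \<and> affine_hyperplane d (Hyp2 d j C)
     \<and> \<not> parallel_hyperplanes d (Hyp1 d j C) (Hyp2 d j C) \<and> equiparts d j (Hyp1 d j C) (Hyp2 d j C)
     \<and> (\<lambda>_. 0) \<in> Hyp2 d j C"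
proof -
  have j1: "1 \<le> j" using j by (cases j) auto
  have d2: "2 \<le> d" using j j1 by linarith
  have cR1: "card (R1 j C) = d" using card_R1[OF C(1)] C(2) j by linarith
  have cR2: "card (R2 j C) = d - 1" using card_R2[OF C(1)] C(2) j by linarith
  have dg1: "degree (P1 j C) = d" by (simp add: degree_P1 cR1)
  have dg2: "degree (P2 j C) = d - 1" by (simp add: degree_P2 cR2)
  have mem1: "moment_curve d t \<in> Hyp1 d j C \<longleftrightarrow> poly (P1 j C) t = 0" for t
    using PE1[of "P1 j C" d t] dg1 curve_Rn[of d t] by (auto simp: Hyp1_def)
  have mem2: "moment_curve d t \<in> Hyp2 d j C \<longleftrightarrow> t * poly (P2 j C) t = 0" for t
    using PE2[of "P2 j C" d t] dg2 d2 curve_Rn[of d t] by (auto simp: Hyp2_def)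
  have aff1: "affine_hyperplane d (Hyp1 d j C)"
    unfolding affine_hyperplane_def Hyp1_def
    apply (rule exI[of _ "\<lambda>k. coeff (P1 j C) (Suc k)"], rule exI[of _ "- coeff (P1 j C) 0"])
    using lead_P1[of j C] cR1 d2 by (auto intro!: exI[of _ "d - 1"])
  have aff2: "affine_hyperplane d (Hyp2 d j C)"
    unfolding affine_hyperplane_def Hyp2_def
    apply (rule exI[of _ "\<lambda>k. coeff (P2 j C) k"], rule exI[of _ "0"])
    using lead_P2[of j C] cR2 d2 by (auto intro!: exI[of _ "d - 1"])
  have zero: "(\<lambda>_. 0) \<in> Hyp2 d j C" by (simp add: Hyp2_def zero_Rn lin_zero)
  have eq: "equiparts d j (Hyp1 d j C) (Hyp2 d j C)"
    unfolding equiparts_def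
  proof (intro ballI)
    fix S1 S2 i assume S1: "S1 \<in> closed_sides d (Hyp1 d j C)" and S2: "S2 \<in> closed_sides d (Hyp2 d j C)"
      and i: "i \<in> {1..j}"
    obtain a1 b1 where a1: "\<exists>i<d. a1 i \<noteq> 0" and H1: "Hyp1 d j C = {x \<in> Rn d. lin d a1 x = b1}"
      and S1e: "S1 = {x \<in> Rn d. lin d a1 x \<le> b1}" using S1 unfolding closed_sides_def by blast
    obtain a2 b2 where a2: "\<exists>i<d. a2 i \<noteq> 0" and H2: "Hyp2 d j C = {x \<in> Rn d. lin d a2 x = b2}"
      and S2e: "S2 = {x \<in> Rn d. lin d a2 x \<le> b2}" using S2 unfolding closed_sides_def by blast
    have b2: "b2 = 0" using zero H2 by (simp add: lin_zero)
    have "\<forall>r\<in>R1 j C. poly (cpoly d a1 b1) r = 0"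
    proof
      fix r assume "r \<in> R1 j C"
      then have "moment_curve d r \<in> Hyp1 d j C" using mem1 P1_root by blast
      then show "poly (cpoly d a1 b1) r = 0" using H1 by (simp add: poly_cpoly)
    qed
    then obtain c1 where c1: "c1 \<noteq> 0" "cpoly d a1 b1 = smult c1 (P1 j C)"
      using poly_eq_smult_prod[OF R1_fin[of j C] cpoly_nz[OF a1]] degree_cpoly[of d a1 b1] cR1
      unfolding P1_def by auto
    have "\<forall>r\<in>R2 j C. poly (qpoly d a2) r = 0"
    proof
      fix r assume r: "r \<in> R2 j C"
      then have "moment_curve d r \<in> Hyp2 d j C" using mem2 P2_root by auto
      then have "r * poly (qpoly d a2) r = 0" using H2 b2 by (simp add: poly_qpoly)
      then show "poly (qpoly d a2) r = 0" using R_pos(1)[OF r] by simp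
    qed
    then obtain c2 where c2: "c2 \<noteq> 0" "qpoly d a2 = smult c2 (P2 j C)"
      using poly_eq_smult_prod[OF R2_fin[of j C] qpoly_nz[OF a2]] degree_qpoly[of d a2] cR2
      unfolding P2_def by auto
    have "{t\<in>{real i<..<real i+1}. moment_curve d t \<in> S1 \<inter> S2} =
          {t\<in>{real i<..<real i+1}. c1 * poly (P1 j C) t \<le> 0 \<and> c2 * poly (P2 j C) t \<le> 0}"
    proof (intro Collect_cong conj_cong refl)
      fix t assume t: "t \<in> {real i<..<real i+1}"
      then have tp: "0 < t" using i by auto
      have e1: "moment_curve d t \<in> S1 \<longleftrightarrow> c1 * poly (P1 j C) t \<le> 0"
        using poly_cpoly[of d a1 b1 t] c1 curve_Rn[of d t] by (auto simp: S1e)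
      have "lin d a2 (moment_curve d t) = t * (c2 * poly (P2 j C) t)"
        using poly_qpoly[of t d a2] c2 by simp
      then have e2: "moment_curve d t \<in> S2 \<longleftrightarrow> c2 * poly (P2 j C) t \<le> 0"
        using curve_Rn[of d t] tp b2 by (auto simp: S2e mult_le_0_iff)
      show "moment_curve d t \<in> S1 \<inter> S2 \<longleftrightarrow> c1 * poly (P1 j C) t \<le> 0 \<and> c2 * poly (P2 j C) t \<le> 0"
        using e1 e2 by blast
    qed
    then show "arc_mass d i (S1 \<inter> S2) = 1/4"
      unfolding arc_mass_eq using exist_meas[OF i c1(1) c2(1)] by simp
  qed
  show ?thesis using aff1 aff2 zero eq equiparts_not_parallel[OF j1 eq] by blast
qed



lemma lin_smult: "lin d (\<lambda>k. s * a k) x = s * lin d a x"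
  by (simp add: lin_def sum_distrib_left mult.assoc)

lemma lin_cong: "(\<forall>k<d. a k = c * a' k) \<Longrightarrow> lin d a x = c * lin d a' x"
  by (simp add: lin_def sum_distrib_left mult.assoc)

lemma sum_all3:
  fixes x :: "nat \<Rightarrow> nat"
  assumes "finite A" "\<forall>i\<in>A. 3 \<le> x i" "(\<Sum>i\<in>A. x i) \<le> 3 * card A"
  shows "\<forall>i\<in>A. x i = 3"
proof -
  have "(\<Sum>i\<in>A. x i) = (\<Sum>i\<in>A. 3 + (x i - 3))" using assms(2) by (intro sum.cong) auto
  also have "\<dots> = 3 * card A + (\<Sum>i\<in>A. x i - 3)" by (simp add: sum.distrib)
  finally have "(\<Sum>i\<in>A. x i - 3) = 0" using assms(3) by linarith
  then show ?thesis using assms(1,2) by (simp add: sum_eq_0_iff) (meson antisym not_less_eq_eq)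
qed

lemma necessity:
  assumes j: "odd j" "2*d = 3*j+1" and aff: "affine_hyperplane d H1" "affine_hyperplane d H2"
    and eq: "equiparts d j H1 H2" and z: "(\<lambda>_. 0) \<in> H2"
  shows "\<exists>C. C \<subseteq> {1..j} \<and> 2*card C = j+1 \<and> H1 = Hyp1 d j C \<and> H2 = Hyp2 d j C"
proof -
  have j1: "1 \<le> j" using j by (cases j) auto
  have d2: "2 \<le> d" using j j1 by linarith
  obtain a1 b1 where a1: "\<exists>i<d. a1 i \<noteq> 0" and H1: "H1 = {x \<in> Rn d. lin d a1 x = b1}"
    using aff(1) unfolding affine_hyperplane_def by blast
  obtain a2 b2 where a2: "\<exists>i<d. a2 i \<noteq> 0" and H2: "H2 = {x \<in> Rn d. lin d a2 x = b2}"
    using aff(2) unfolding affine_hyperplane_def by blast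
  have b2: "b2 = 0" using z H2 by (simp add: lin_zero)
  define p1 where "p1 = cpoly d a1 b1"
  define q2 where "q2 = qpoly d a2"
  define f where "f t = poly p1 t" for t
  define g where "g t = t * poly q2 t" for t
  have fe: "f t = lin d a1 (moment_curve d t) - b1" for t by (simp add: f_def p1_def poly_cpoly)
  have ge: "g t = lin d a2 (moment_curve d t)" for t by (simp add: g_def q2_def poly_qpoly)
  have p1nz: "p1 \<noteq> 0" using cpoly_nz[OF a1] by (simp add: p1_def)
  have q2nz: "q2 \<noteq> 0" using qpoly_nz[OF a2] by (simp add: q2_def)
  define Zf where "Zf i = {t\<in>{real i<..<real i+1}. f t = 0}" for i
  define Zg where "Zg i = {t\<in>{real i<..<real i+1}. g t = 0}" for i
  have Zf_sub: "Zf i \<subseteq> {real i<..<real i+1}" for i by (auto simp: Zf_def)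
  have Zg_sub: "Zg i \<subseteq> {real i<..<real i+1}" for i by (auto simp: Zg_def)
  have Zf_roots: "Zf i \<subseteq> {t. poly p1 t = 0}" for i by (auto simp: Zf_def f_def)
  have Zg_roots: "i \<in> {1..j} \<Longrightarrow> Zg i \<subseteq> {t. poly q2 t = 0}" for i by (auto simp: Zg_def g_def)
  have Zf_fin: "finite (Zf i)" for i using Zf_roots poly_roots_finite[OF p1nz] finite_subset by blast
  have Zg_fin: "finite (Zg i)" for i
  proof -
    have "Zg i \<subseteq> {t. poly q2 t = 0} \<union> {0}" by (auto simp: Zg_def g_def)
    then show ?thesis using poly_roots_finite[OF q2nz] finite_subset by blast
  qed
  have cf: "continuous_on UNIV f" unfolding f_def by (intro continuous_intros)
  have cg: "continuous_on UNIV g" unfolding g_def by (intro continuous_intros)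
  have arc: "3 \<le> card (Zf i) + card (Zg i) \<and> (card (Zf i) + card (Zg i) = 3 \<longrightarrow>
     (Zf i = {real i+1/4, real i+3/4} \<and> Zg i = {real i+1/2}) \<or> (Zf i = {real i+1/2} \<and> Zg i = {real i+1/4, real i+3/4}))"
    if i: "i \<in> {1..j}" for i
  proof -
    have q: "measure lborel {t\<in>{real i<..<real i+1}. (if p then -1 else 1) * f t \<le> 0 \<and> (if q then -1 else 1) * g t \<le> 0} = 1/4" for p q
    proof -
      define s1 :: real where "s1 = (if p then -1 else 1)"
      define s2 :: real where "s2 = (if q then -1 else 1)"
      have s: "s1 \<noteq> 0" "s2 \<noteq> 0" by (auto simp: s1_def s2_def)
      define S1 where "S1 = {x\<in>Rn d. lin d (\<lambda>k. s1 * a1 k) x \<le> s1 * b1}"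
      define S2 where "S2 = {x\<in>Rn d. lin d (\<lambda>k. s2 * a2 k) x \<le> s2 * b2}"
      have "S1 \<in> closed_sides d H1" unfolding S1_def
        by (rule cs_intro) (use a1 s H1 in \<open>auto simp: lin_smult\<close>)
      moreover have "S2 \<in> closed_sides d H2" unfolding S2_def
        by (rule cs_intro) (use a2 s H2 in \<open>auto simp: lin_smult\<close>)
      ultimately have "arc_mass d i (S1 \<inter> S2) = 1/4" using eq i unfolding equiparts_def by blast
      moreover have "{t\<in>{real i<..<real i+1}. moment_curve d t \<in> S1 \<inter> S2} =
         {t\<in>{real i<..<real i+1}. s1 * f t \<le> 0 \<and> s2 * g t \<le> 0}"
        using curve_Rn[of d] by (auto simp: S1_def S2_def lin_smult fe ge right_diff_distrib b2)
      ultimately show ?thesis by (simp add: arc_mass_eq s1_def s2_def)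
    qed
    have "3 \<le> card {t\<in>{real i<..<real i+1}. f t = 0} + card {t\<in>{real i<..<real i+1}. g t = 0} \<and>
    (card {t\<in>{real i<..<real i+1}. f t = 0} + card {t\<in>{real i<..<real i+1}. g t = 0} = 3 \<longrightarrow>
     ({t\<in>{real i<..<real i+1}. f t = 0} = {real i+1/4, real i+3/4} \<and> {t\<in>{real i<..<real i+1}. g t = 0} = {real i+1/2}) \<or>
     ({t\<in>{real i<..<real i+1}. f t = 0} = {real i+1/2} \<and> {t\<in>{real i<..<real i+1}. g t = 0} = {real i+1/4, real i+3/4}))"
      by (rule arc_lemma[OF cf cg]) (use Zf_fin Zg_fin q in \<open>auto simp: Zf_def Zg_def\<close>)
    then show ?thesis by (simp add: Zf_def Zg_def)
  qed
  have sumf: "(\<Sum>i\<in>{1..j}. card (Zf i)) \<le> d"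
  proof -
    have "(\<Sum>i\<in>{1..j}. card (Zf i)) = card (\<Union>i\<in>{1..j}. Zf i)"
      by (rule arcs_card[OF Zf_sub Zf_fin, symmetric]) simp
    also have "\<dots> \<le> card {t. poly p1 t = 0}"
      by (rule card_mono[OF poly_roots_finite[OF p1nz]]) (use Zf_roots in blast)
    also have "\<dots> \<le> degree p1" by (rule card_poly_roots_bound[OF p1nz])
    also have "\<dots> \<le> d" by (simp add: p1_def degree_cpoly)
    finally show ?thesis .
  qed
  have sumg: "(\<Sum>i\<in>{1..j}. card (Zg i)) \<le> d - 1"
  proof -
    have "(\<Sum>i\<in>{1..j}. card (Zg i)) = card (\<Union>i\<in>{1..j}. Zg i)"
      by (rule arcs_card[OF Zg_sub Zg_fin, symmetric]) simp
    also have "\<dots> \<le> card {t. poly q2 t = 0}"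
      by (rule card_mono[OF poly_roots_finite[OF q2nz]]) (use Zg_roots in blast)
    also have "\<dots> \<le> degree q2" by (rule card_poly_roots_bound[OF q2nz])
    also have "\<dots> \<le> d - 1" using degree_qpoly[of d a2] by (simp add: q2_def)
    finally show ?thesis .
  qed
  have "(\<Sum>i\<in>{1..j}. card (Zf i) + card (Zg i)) \<le> 3 * card {1..j}"
    using sumf sumg j d2 by (simp add: sum.distrib)
  then have all3: "\<forall>i\<in>{1..j}. card (Zf i) + card (Zg i) = 3"
    using arc by (intro sum_all3) auto
  define C where "C = {i\<in>{1..j}. Zf i = {real i+1/4, real i+3/4}}"
  have Csub: "C \<subseteq> {1..j}" by (auto simp: C_def)
  have ZZ: "Zf i = Z1 C i \<and> Zg i = Z2 C i" if i: "i \<in> {1..j}" for i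
  proof -
    have ne: "{real i+1/4, real i+3/4} \<noteq> {real i+1/2}" by (auto simp: doubleton_eq_iff)
    have "(Zf i = {real i+1/4, real i+3/4} \<and> Zg i = {real i+1/2}) \<or> (Zf i = {real i+1/2} \<and> Zg i = {real i+1/4, real i+3/4})"
      using arc[OF i] all3 i by auto
    then show ?thesis using ne i by (auto simp: C_def Z1_def Z2_def)
  qed
  have R1e: "R1 j C = (\<Union>i\<in>{1..j}. Zf i)" using ZZ by (simp add: R1_def)
  have R2e: "R2 j C = (\<Union>i\<in>{1..j}. Zg i)" using ZZ by (simp add: R2_def)
  have cR1: "card (R1 j C) \<le> d" unfolding R1e
    using sumf arcs_card[OF Zf_sub Zf_fin, of "{1..j}"] by simp
  have cR2: "card (R2 j C) \<le> d - 1" unfolding R2e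
    using sumg arcs_card[OF Zg_sub Zg_fin, of "{1..j}"] by simp
  have cC: "2 * card C = j + 1" using card_R1[OF Csub] card_R2[OF Csub] cR1 cR2 j d2 by linarith
  have cR1': "card (R1 j C) = d" using card_R1[OF Csub] cC j by linarith
  have cR2': "card (R2 j C) = d - 1" using card_R2[OF Csub] cC j by linarith
  obtain c1 where c1: "c1 \<noteq> 0" "p1 = smult c1 (P1 j C)"
  proof -
    have "\<forall>r\<in>R1 j C. poly p1 r = 0" using R1e Zf_roots by blast
    then show ?thesis using that poly_eq_smult_prod[OF R1_fin[of j C] p1nz] degree_cpoly[of d a1 b1] cR1'
      unfolding P1_def p1_def by auto
  qed
  obtain c2 where c2: "c2 \<noteq> 0" "q2 = smult c2 (P2 j C)"
  proof -
    have "\<forall>r\<in>R2 j C. poly q2 r = 0" using R2e Zg_roots by blast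
    then show ?thesis using that poly_eq_smult_prod[OF R2_fin[of j C] q2nz] degree_qpoly[of d a2] cR2'
      unfolding P2_def q2_def by auto
  qed
  have "\<forall>k<d. a1 k = c1 * coeff (P1 j C) (Suc k)"
    using c1(2) coeff_cpoly_Suc[of d a1 b1] by (simp add: p1_def; metis coeff_smult)
  then have l1: "lin d a1 x = c1 * lin d (\<lambda>k. coeff (P1 j C) (Suc k)) x" for x by (rule lin_cong)
  have bb1: "b1 = c1 * (- coeff (P1 j C) 0)"
    using c1(2) coeff_cpoly_0[of d a1 b1] by (simp add: p1_def; metis coeff_smult minus_equation_iff)
  have ceq: "(c1 * L = - (c1 * coeff (P1 j C) 0)) \<longleftrightarrow> L = - coeff (P1 j C) 0" for L
    using c1(1) by (metis mult_cancel_left mult_minus_right)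
  have "H1 = Hyp1 d j C" unfolding H1 Hyp1_def using l1 bb1 c1(1) ceq by auto
  have "\<forall>k<d. a2 k = c2 * coeff (P2 j C) k"
    using c2(2) coeff_qpoly[of d a2] by (simp add: q2_def; metis coeff_smult)
  then have l2: "lin d a2 x = c2 * lin d (\<lambda>k. coeff (P2 j C) k) x" for x by (rule lin_cong)
  have "H2 = Hyp2 d j C" unfolding H2 Hyp2_def using l2 b2 c2(1) by auto
  then show ?thesis using Csub cC \<open>H1 = Hyp1 d j C\<close> by blast
qed


lemma Hyp1_mem:
  assumes "card (R1 j C) = d"
  shows "moment_curve d t \<in> Hyp1 d j C \<longleftrightarrow> t \<in> R1 j C"
proof -
  have "degree (P1 j C) \<le> d" by (simp add: degree_P1 assms)
  then have "moment_curve d t \<in> Hyp1 d j C \<longleftrightarrow> poly (P1 j C) t = 0"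
    using PE1[of "P1 j C" d t] curve_Rn[of d t] by (auto simp: Hyp1_def)
  also have "\<dots> \<longleftrightarrow> t \<in> R1 j C" by (simp add: poly_P1 R1_fin)
  finally show ?thesis .
qed

lemma C_recover:
  assumes "C \<subseteq> {1..j}" "card (R1 j C) = d"
  shows "C = {i\<in>{1..j}. moment_curve d (real i + 1/4) \<in> Hyp1 d j C}"
proof -
  have "i \<in> C \<longleftrightarrow> real i + 1/4 \<in> R1 j C" if i: "i \<in> {1..j}" for i
  proof -
    have "real i + 1/4 \<in> R1 j C \<longleftrightarrow> real i + 1/4 \<in> Z1 C i"
      unfolding R1_def by (rule arcs_mem[OF Z1_sub i]) auto
    then show ?thesis by (auto simp: Z1_def)
  qed
  then show ?thesis using assms(1) Hyp1_mem[OF assms(2)] by auto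
qed

theorem lemma5p5:
  fixes j d :: nat
  assumes "odd j" and "2 * d = 3 * j + 1"
  shows "card {(H1, H2). affine_hyperplane d H1 \<and> affine_hyperplane d H2
                \<and> \<not> parallel_hyperplanes d H1 H2 \<and> equiparts d j H1 H2
                \<and> (\<lambda>_. 0) \<in> H2}
         = j choose ((j - 1) div 2)"
proof -
  define CC where "CC = {C. C \<subseteq> {1..j} \<and> card C = (j+1) div 2}"
  define F where "F C = (Hyp1 d j C, Hyp2 d j C)" for C
  have cc: "2 * card C = j + 1 \<longleftrightarrow> card C = (j+1) div 2" for C using assms(1) by presburger
  have SolE: "{(H1, H2). affine_hyperplane d H1 \<and> affine_hyperplane d H2
                \<and> \<not> parallel_hyperplanes d H1 H2 \<and> equiparts d j H1 H2
                \<and> (\<lambda>_. 0) \<in> H2} = F ` CC"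
  proof (intro equalityI subsetI)
    fix x assume "x \<in> {(H1, H2). affine_hyperplane d H1 \<and> affine_hyperplane d H2
                \<and> \<not> parallel_hyperplanes d H1 H2 \<and> equiparts d j H1 H2 \<and> (\<lambda>_. 0) \<in> H2}"
    then obtain H1 H2 where x: "x = (H1, H2)" "affine_hyperplane d H1" "affine_hyperplane d H2"
      "equiparts d j H1 H2" "(\<lambda>_. 0) \<in> H2" by blast
    obtain C where "C \<subseteq> {1..j}" "2*card C = j+1" "H1 = Hyp1 d j C" "H2 = Hyp2 d j C"
      using necessity[OF assms x(2,3,4,5)] by blast
    then show "x \<in> F ` CC" using x(1) cc by (auto simp: CC_def F_def)
  next
    fix x assume "x \<in> F ` CC"
    then obtain C where C: "C \<subseteq> {1..j}" "2 * card C = j+1" "x = F C" using cc by (auto simp: CC_def)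
    show "x \<in> {(H1, H2). affine_hyperplane d H1 \<and> affine_hyperplane d H2
                \<and> \<not> parallel_hyperplanes d H1 H2 \<and> equiparts d j H1 H2 \<and> (\<lambda>_. 0) \<in> H2}"
      using exist[OF assms C(1,2)] C(3) by (simp add: F_def)
  qed
  have inj: "inj_on F CC"
  proof (rule inj_onI)
    fix C C' assume C: "C \<in> CC" "C' \<in> CC" "F C = F C'"
    have cd: "card (R1 j D) = d" if "D \<in> CC" for D
    proof -
      have D: "D \<subseteq> {1..j}" "card D = (j+1) div 2" using that by (auto simp: CC_def)
      have "2 * card D = j + 1" using cc[of D] D(2) by blast
      then show ?thesis using card_R1[OF D(1)] assms(2) by linarith
    qed
    have r: "card (R1 j C) = d" "card (R1 j C') = d" using cd C(1,2) by auto
    have "Hyp1 d j C = Hyp1 d j C'" using C(3) by (simp add: F_def)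
    then show "C = C'" using C_recover[of C j d] C_recover[of C' j d] r C(1,2) by (auto simp: CC_def)
  qed
  have "card (F ` CC) = card CC" by (rule card_image[OF inj])
  also have "card CC = j choose ((j+1) div 2)" unfolding CC_def using n_subsets[of "{1..j}" "(j+1) div 2"] by simp
  also have "\<dots> = j choose ((j - 1) div 2)"
  proof -
    have "(j+1) div 2 \<le> j" "j - (j+1) div 2 = (j - 1) div 2" using assms(1) by (auto elim!: oddE)
    then show ?thesis using binomial_symmetric[of "(j+1) div 2" j] by simp
  qed
  finally show ?thesis using SolE by simp
qed


end
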